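(* Let $C=L_1;\ldots;L_d$ be a sorting network of depth $d\ge2$ on $n$ channels containing no redundant comparators. Then every comparator $(i,j)\in L_{d-1}$ connects adjacent blocks of $C$; that is, every channel $m$ with $i<m<j$ belongs either to the block containing $i$ or to the block containing $j$.
   Context: Channels are numbered $1,\ldots,n$. A comparator network of depth $d$ is a sequence $C=L_1;\ldots;L_d$ of layers; each layer is a set of comparators $(i,j)$ with $1\le i<j\le n$, each channel occurring in at most one comparator of a layer. An input $\bar x\in\{0,1\}^n$ propagates: $\bar x_0=\bar x$, and $\bar x_k$ is obtained from $\bar x_{k-1}$ by, for each $(i,j)\in L_k$, putting the minimum of the values at positions $i,j$ at position $i$ and the maximum at position $j$. The output is $C(\bar x)=\bar x_d$; $C$ is a sorting network if $C(\bar x)$ is sorted non-decreasingly for all $\bar x\in\{0,1\}^n$. A comparator $(i,j)\in L_\ell$ is redundant if for every input $\bar x$ we have $(\bar x_{\ell-1})_i\le(\bar x_{\ell-1})_j$. The blocks of $C$ are the vertex sets of the connected components of the graph on $\{1,\ldots,n\}$ with an edge $\{i,j\}$ for each comparator $(i,j)$ in the last layer $L_d$. *)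

theory Defs
  imports Main
begin

text \<open>Channels are 1..n. A layer is a set of comparators (i,j); a network is a list of layers
  L_1 .. L_d (list index k-1 holds L_k).\<close>

type_synonym layer = "(nat \<times> nat) set"
type_synonym network = "layer list"

definition is_layer :: "nat \<Rightarrow> layer \<Rightarrow> bool" where
  "is_layer n L \<longleftrightarrow> (\<forall>(i,j)\<in>L. 1 \<le> i \<and> i < j \<and> j \<le> n) \<and>
     (\<forall>c\<in>L. \<forall>c'\<in>L. c \<noteq> c' \<longrightarrow> {fst c, snd c} \<inter> {fst c', snd c'} = {})"

definition is_network :: "nat \<Rightarrow> network \<Rightarrow> bool" where
  "is_network n C \<longleftrightarrow> (\<forall>L\<in>set C. is_layer n L)"

definition apply_layer :: "layer \<Rightarrow> (nat \<Rightarrow> nat) \<Rightarrow> (nat \<Rightarrow> nat)" where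
  "apply_layer L x = (\<lambda>p.
     if \<exists>j. (p, j) \<in> L then min (x p) (x (THE j. (p, j) \<in> L))
     else if \<exists>i. (i, p) \<in> L then max (x (THE i. (i, p) \<in> L)) (x p)
     else x p)"

definition state :: "network \<Rightarrow> nat \<Rightarrow> (nat \<Rightarrow> nat) \<Rightarrow> (nat \<Rightarrow> nat)" where
  "state C k x = fold apply_layer (take k C) x"

definition binary_input :: "nat \<Rightarrow> (nat \<Rightarrow> nat) \<Rightarrow> bool" where
  "binary_input n x \<longleftrightarrow> (\<forall>p\<in>{1..n}. x p \<in> {0, 1})"

definition sorting_network :: "nat \<Rightarrow> network \<Rightarrow> bool" where
  "sorting_network n C \<longleftrightarrow> is_network n C \<and>
     (\<forall>x. binary_input n x \<longrightarrow>
        (\<forall>p q. 1 \<le> p \<longrightarrow> p \<le> q \<longrightarrow> q \<le> n \<longrightarrow> state C (length C) x p \<le> state C (length C) x q))"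

text \<open>Comparator (i,j) in layer L_l (1-based l) is redundant.\<close>
definition redundant :: "nat \<Rightarrow> network \<Rightarrow> nat \<Rightarrow> nat \<times> nat \<Rightarrow> bool" where
  "redundant n C l c \<longleftrightarrow> (\<forall>x. binary_input n x \<longrightarrow>
      state C (l - 1) x (fst c) \<le> state C (l - 1) x (snd c))"

definition no_redundant :: "nat \<Rightarrow> network \<Rightarrow> bool" where
  "no_redundant n C \<longleftrightarrow> (\<forall>l\<in>{1..length C}. \<forall>c\<in>C ! (l - 1). \<not> redundant n C l c)"

definition last_edges :: "network \<Rightarrow> (nat \<times> nat) set" where
  "last_edges C = (let L = last C in L \<union> converse L)"

definition block :: "nat \<Rightarrow> network \<Rightarrow> nat \<Rightarrow> nat set" where
  "block n C i = {m \<in> {1..n}. (i, m) \<in> (last_edges C)\<^sup>*}"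

end

theory Submission
  imports Defs
begin

lemma layer_disj:
  assumes "is_layer n L" "c \<in> L" "c' \<in> L" "c \<noteq> c'"
  shows "{fst c, snd c} \<inter> {fst c', snd c'} = {}"
  using assms unfolding is_layer_def by blast

lemma layer_rng:
  assumes "is_layer n L" "(p,q) \<in> L"
  shows "1 \<le> p" "p < q" "q \<le> n"
  using assms unfolding is_layer_def by auto

lemma layer_lo_uniq:
  assumes "is_layer n L" "(p,q) \<in> L" "(p,q') \<in> L" shows "q' = q"
  using layer_disj[OF assms(1,2,3)] by (cases "q = q'") auto

lemma layer_hi_uniq:
  assumes "is_layer n L" "(p,q) \<in> L" "(p',q) \<in> L" shows "p' = p"
  using layer_disj[OF assms(1,2,3)] by (cases "p = p'") auto

lemma layer_not_both:
  assumes "is_layer n L" "(p,q) \<in> L" "(q',p) \<in> L" shows False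
proof -
  have "(p,q) \<noteq> (q',p)" using layer_rng[OF assms(1,2)] by auto
  then show False using layer_disj[OF assms(1,2,3)] by auto
qed

lemma al_lo:
  assumes "is_layer n L" "(p,q) \<in> L"
  shows "apply_layer L x p = min (x p) (x q)"
proof -
  have "(THE j. (p,j) \<in> L) = q"
    using assms layer_lo_uniq by blast
  then show ?thesis using assms unfolding apply_layer_def by auto
qed

lemma al_hi:
  assumes "is_layer n L" "(p,q) \<in> L"
  shows "apply_layer L x q = max (x p) (x q)"
proof -
  have "\<not> (\<exists>j. (q,j) \<in> L)" using assms layer_not_both by blast
  moreover have "(THE i. (i,q) \<in> L) = p"
    using assms layer_hi_uniq by blast
  ultimately show ?thesis using assms unfolding apply_layer_def by auto
qed

lemma al_none:
  assumes "\<forall>q. (p,q) \<notin> L" "\<forall>q. (q,p) \<notin> L"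
  shows "apply_layer L x p = x p"
  using assms unfolding apply_layer_def by auto

lemma al_cases:
  assumes "is_layer n L"
  obtains (lo) q where "(p,q) \<in> L" "apply_layer L x p = min (x p) (x q)"
  | (hi) q where "(q,p) \<in> L" "apply_layer L x p = max (x q) (x p)"
  | (none) "\<forall>q. (p,q) \<notin> L" "\<forall>q. (q,p) \<notin> L" "apply_layer L x p = x p"
  using al_lo[OF assms] al_hi[OF assms] al_none by metis

lemma al_mono_comm:
  assumes "mono f"
  shows "apply_layer L (f \<circ> x) = f \<circ> apply_layer L x"
  by (rule ext) (simp add: apply_layer_def min_of_mono[OF assms] max_of_mono[OF assms])

lemma run_mono_comm:
  assumes "mono f"
  shows "fold apply_layer N (f \<circ> x) = f \<circ> fold apply_layer N x"
  by (induction N arbitrary: x) (simp_all add: al_mono_comm[OF assms])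

definition valid :: "nat \<Rightarrow> network \<Rightarrow> bool" where
  "valid n N \<longleftrightarrow> (\<forall>L\<in>set N. is_layer n L)"

lemma valid_Cons[simp]: "valid n (L#N) \<longleftrightarrow> is_layer n L \<and> valid n N"
  unfolding valid_def by auto

lemma al_sorted:
  assumes "is_layer n L" "\<forall>p q. 1 \<le> p \<longrightarrow> p \<le> q \<longrightarrow> q \<le> n \<longrightarrow> x p \<le> x q"
  shows "apply_layer L x = x"
proof
  fix p
  consider (lo) q where "(p,q) \<in> L" "apply_layer L x p = min (x p) (x q)"
    | (hi) q where "(q,p) \<in> L" "apply_layer L x p = max (x q) (x p)"
    | (none) "apply_layer L x p = x p"
    using al_cases[OF assms(1)] by metis
  then show "apply_layer L x p = x p"
  proof cases
    case (lo q) then show ?thesis using layer_rng[OF assms(1) lo(1)] assms(2) by auto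
  next
    case (hi q) then show ?thesis using layer_rng[OF assms(1) hi(1)] assms(2) by auto
  qed auto
qed

lemma run_sorted:
  assumes "valid n N" "\<forall>p q. 1 \<le> p \<longrightarrow> p \<le> q \<longrightarrow> q \<le> n \<longrightarrow> x p \<le> x q"
  shows "fold apply_layer N x = x"
  using assms by (induction N) (auto simp add: al_sorted)

lemma al_local:
  assumes "is_layer n L"
    "\<And>t. t = s \<or> (s,t) \<in> L \<or> (t,s) \<in> L \<Longrightarrow> y t = y' t"
  shows "apply_layer L y s = apply_layer L y' s"
proof -
  consider (lo) q where "(s,q) \<in> L" | (hi) q where "(q,s) \<in> L" | (none) "\<forall>q. (s,q) \<notin> L" "\<forall>q. (q,s) \<notin> L"
    by blast
  then show ?thesis
  proof cases
    case (lo q) then show ?thesis using al_lo[OF assms(1) lo, of y] al_lo[OF assms(1) lo, of y'] assms(2) by auto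
  next
    case (hi q) then show ?thesis using al_hi[OF assms(1) hi, of y] al_hi[OF assms(1) hi, of y'] assms(2) by auto
  next
    case none then show ?thesis using al_none[OF none] assms(2) by auto
  qed
qed

lemma al_sd:
  assumes L: "is_layer n L" and r: "r \<in> {1..n}" and d: "y' r + 1 = y r" and e: "\<forall>s. s \<noteq> r \<longrightarrow> y' s = y s"
  shows "\<exists>r'. r' \<in> {1..n} \<and> apply_layer L y r' = y r \<and> apply_layer L y' r' + 1 = apply_layer L y r'
           \<and> (\<forall>s. s \<noteq> r' \<longrightarrow> apply_layer L y' s = apply_layer L y s)"
proof -
  consider (lo) q where "(r,q) \<in> L" | (hi) q where "(q,r) \<in> L" | (none) "\<forall>q. (r,q) \<notin> L" "\<forall>q. (q,r) \<notin> L"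
    by blast
  then show ?thesis
  proof cases
    case (lo q)
    note rq = layer_rng[OF L lo]
    have oth: "apply_layer L y' s = apply_layer L y s" if "s \<noteq> r" "s \<noteq> q" for s
    proof (rule al_local[OF L])
      fix t assume "t = s \<or> (s,t) \<in> L \<or> (t,s) \<in> L"
      moreover have "(s,r) \<notin> L" using layer_not_both[OF L lo] by blast
      moreover have "(r,s) \<notin> L" using layer_lo_uniq[OF L lo] that by blast
      ultimately have "t \<noteq> r" using that by auto
      then show "y' t = y t" using e by auto
    qed
    have yq: "y' q = y q" using e rq by auto
    have l1: "apply_layer L y r = min (y r) (y q)" "apply_layer L y' r = min (y' r) (y q)"
      using al_lo[OF L lo, of y] al_lo[OF L lo, of y'] yq by auto
    have h1: "apply_layer L y q = max (y r) (y q)" "apply_layer L y' q = max (y' r) (y q)"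
      using al_hi[OF L lo, of y] al_hi[OF L lo, of y'] yq by auto
    show ?thesis
    proof (cases "y r \<le> y q")
      case True
      then have "apply_layer L y r = y r" "apply_layer L y' r = y' r" "apply_layer L y' q = apply_layer L y q"
        using l1 h1 d by auto
      then show ?thesis using r d oth by (intro exI[of _ r]) auto
    next
      case False
      then have "apply_layer L y q = y r" "apply_layer L y' q = y' r" "apply_layer L y' r = apply_layer L y r"
        using l1 h1 d by auto
      then show ?thesis using rq d oth by (intro exI[of _ q]) (auto, metis)
    qed
  next
    case (hi q)
    note rq = layer_rng[OF L hi]
    have oth: "apply_layer L y' s = apply_layer L y s" if "s \<noteq> r" "s \<noteq> q" for s
    proof (rule al_local[OF L])
      fix t assume "t = s \<or> (s,t) \<in> L \<or> (t,s) \<in> L"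
      moreover have "(r,s) \<notin> L" using layer_not_both[OF L _ hi] by blast
      moreover have "(s,r) \<notin> L" using layer_hi_uniq[OF L hi] that by blast
      ultimately have "t \<noteq> r" using that by auto
      then show "y' t = y t" using e by auto
    qed
    have yq: "y' q = y q" using e rq by auto
    have l1: "apply_layer L y q = min (y q) (y r)" "apply_layer L y' q = min (y q) (y' r)"
      using al_lo[OF L hi, of y] al_lo[OF L hi, of y'] yq by auto
    have h1: "apply_layer L y r = max (y q) (y r)" "apply_layer L y' r = max (y q) (y' r)"
      using al_hi[OF L hi, of y] al_hi[OF L hi, of y'] yq by auto
    show ?thesis
    proof (cases "y r \<le> y q")
      case True
      then have "apply_layer L y q = y r" "apply_layer L y' q = y' r" "apply_layer L y' r = apply_layer L y r"
        using l1 h1 d by auto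
      then show ?thesis using rq d oth by (intro exI[of _ q]) (auto, metis)
    next
      case False
      then have "apply_layer L y r = y r" "apply_layer L y' r = y' r" "apply_layer L y' q = apply_layer L y q"
        using l1 h1 d by auto
      then show ?thesis using r d oth by (intro exI[of _ r]) auto
    qed
  next
    case none
    have oth: "apply_layer L y' s = apply_layer L y s" if "s \<noteq> r" for s
    proof (rule al_local[OF L])
      fix t assume "t = s \<or> (s,t) \<in> L \<or> (t,s) \<in> L"
      then have "t \<noteq> r" using that none by auto
      then show "y' t = y t" using e by auto
    qed
    show ?thesis
      apply (rule exI[of _ r])
      using al_none[OF none, of y] al_none[OF none, of y'] d r oth by auto
  qed
qed

lemma run_sd:
  assumes "valid n N" "r \<in> {1..n}" "y' r + 1 = y r" "\<forall>s. s \<noteq> r \<longrightarrow> y' s = y s"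
  shows "\<exists>r'. r' \<in> {1..n} \<and> fold apply_layer N y r' = y r \<and> fold apply_layer N y' r' + 1 = fold apply_layer N y r'
           \<and> (\<forall>s. s \<noteq> r' \<longrightarrow> fold apply_layer N y' s = fold apply_layer N y s)"
  using assms
proof (induction N arbitrary: y y' r)
  case Nil then show ?case by auto
next
  case (Cons L N)
  obtain r1 where r1: "r1 \<in> {1..n}" "apply_layer L y r1 = y r" "apply_layer L y' r1 + 1 = apply_layer L y r1"
     "\<forall>s. s \<noteq> r1 \<longrightarrow> apply_layer L y' s = apply_layer L y s"
    using al_sd[of n L r y' y] Cons.prems by auto
  from Cons.IH[OF _ r1(1) r1(3) r1(4)] Cons.prems(1) r1(2) show ?case by auto
qed

lemma al_range:
  assumes "is_layer n L" "s \<in> {1..n}"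
  shows "apply_layer L y s \<in> y ` {1..n}"
proof -
  consider (lo) q where "(s,q) \<in> L" | (hi) q where "(q,s) \<in> L" | (none) "\<forall>q. (s,q) \<notin> L" "\<forall>q. (q,s) \<notin> L"
    by blast
  then show ?thesis
  proof cases
    case (lo q) then show ?thesis using al_lo[OF assms(1) lo, of y] layer_rng[OF assms(1) lo] assms(2)
      by (auto simp: min_def)
  next
    case (hi q) then show ?thesis using al_hi[OF assms(1) hi, of y] layer_rng[OF assms(1) hi] assms(2)
      by (auto simp: max_def)
  next
    case none then show ?thesis using al_none[OF none] assms(2) by auto
  qed
qed

lemma run_range:
  assumes "valid n N" "s \<in> {1..n}"
  shows "fold apply_layer N y s \<in> y ` {1..n}"
  using assms
proof (induction N arbitrary: y s)
  case Nil then show ?case by auto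
next
  case (Cons L N)
  have sub: "apply_layer L y ` {1..n} \<subseteq> y ` {1..n}" using al_range[of n L] Cons.prems by auto
  have "fold apply_layer N (apply_layer L y) s \<in> apply_layer L y ` {1..n}"
    using Cons by auto
  then show ?case using sub by auto
qed

lemma al_inj:
  assumes L: "is_layer n L" and inj: "inj_on y {1..n}"
  shows "inj_on (apply_layer L y) {1..n}"
proof (rule inj_onI)
  fix s t assume s: "s \<in> {1..n}" and t: "t \<in> {1..n}" and eq: "apply_layer L y s = apply_layer L y t"
  have src: "\<exists>u. u \<in> {1..n} \<and> apply_layer L y s = y u \<and> (u = s \<or> (s,u) \<in> L \<or> (u,s) \<in> L)" if "s \<in> {1..n}" for s
  proof -
    consider (lo) q where "(s,q) \<in> L" | (hi) q where "(q,s) \<in> L" | (none) "\<forall>q. (s,q) \<notin> L" "\<forall>q. (q,s) \<notin> L"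
      by blast
    then show ?thesis
    proof cases
      case (lo q) then show ?thesis using al_lo[OF L lo, of y] layer_rng[OF L lo] that
        by (cases "y s \<le> y q") (rule_tac x=s in exI, force simp: min_def, rule_tac x=q in exI, force simp: min_def)
    next
      case (hi q) then show ?thesis using al_hi[OF L hi, of y] layer_rng[OF L hi] that
        by (cases "y q \<le> y s") (rule_tac x=s in exI, force simp: max_def, rule_tac x=q in exI, force simp: max_def)
    next
      case none then show ?thesis using al_none[OF none] that by auto
    qed
  qed
  obtain u where u: "u \<in> {1..n}" "apply_layer L y s = y u" "u = s \<or> (s,u) \<in> L \<or> (u,s) \<in> L"
    using src[OF s] by blast
  obtain u' where u': "u' \<in> {1..n}" "apply_layer L y t = y u'" "u' = t \<or> (t,u') \<in> L \<or> (u',t) \<in> L"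
    using src[OF t] by blast
  have uu: "u = u'" using inj u u' eq by (metis inj_onD)
  have pair: False if "(a,b) \<in> L" "apply_layer L y a = apply_layer L y b" for a b
  proof -
    have "apply_layer L y a = min (y a) (y b)" "apply_layer L y b = max (y a) (y b)"
      using al_lo[OF L that(1)] al_hi[OF L that(1)] by auto
    moreover have "y a \<noteq> y b" using inj_onD[OF inj, of a b] layer_rng[OF L that(1)] by auto
    ultimately have "min (y a) (y b) = max (y a) (y b)" "y a \<noteq> y b" using that(2) by auto
    then show False by (simp add: min_def max_def split: if_splits)
  qed
  show "s = t"
  proof (rule ccontr)
    assume st: "s \<noteq> t"
    consider "u = s" | "(s,u) \<in> L" | "(u,s) \<in> L" using u by blast
    then show False
    proof cases
      case 1
      then have "(t,s) \<in> L \<or> (s,t) \<in> L" using u' uu st by auto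
      then show False using pair[of t s] pair[of s t] eq by force
    next
      case 2
      then consider "u = t" | "(t,u) \<in> L" | "(u,t) \<in> L" using u' uu by blast
      then show False
      proof cases
        case 1 then show ?thesis using 2 pair eq by auto
      next
        case 3 then show ?thesis using 2 layer_not_both[OF L] by blast
      qed (use 2 layer_hi_uniq[OF L] st in blast)
    next
      case 3
      then consider "u = t" | "(t,u) \<in> L" | "(u,t) \<in> L" using u' uu by blast
      then show False
      proof cases
        case 1 then show ?thesis using 3 pair[of t s] eq by force
      next
        case 2 then show ?thesis using 3 layer_not_both[OF L] by blast
      qed (use 3 layer_lo_uniq[OF L] st in blast)
    qed
  qed
qed

lemma run_inj:
  assumes "valid n N" "inj_on y {1..n}"
  shows "inj_on (fold apply_layer N y) {1..n}"
  using assms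
proof (induction N arbitrary: y)
  case (Cons L N)
  then show ?case using al_inj[of n L y] by simp
qed simp

definition invs :: "nat \<Rightarrow> (nat \<Rightarrow> nat) \<Rightarrow> (nat \<times> nat) set" where
  "invs n v = {(p,q). p \<in> {1..n} \<and> q \<in> {1..n} \<and> p < q \<and> v q < v p}"

lemma finite_invs: "finite (invs n v)"
  by (rule finite_subset[of _ "{1..n} \<times> {1..n}"]) (auto simp: invs_def)

lemma swap_step:
  assumes N: "valid n N" and p0: "p0 \<in> {1..n}" and q0: "q0 \<in> {1..n}" and pq: "p0 \<noteq> q0"
    and wp: "w p0 = Suc a" and wq: "w q0 = a"
    and w': "w' = w(p0 := a, q0 := Suc a)"
  shows "\<exists>r1 r2. r1 \<in> {1..n} \<and> r2 \<in> {1..n} \<and>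
     fold apply_layer N w r1 = Suc a \<and> fold apply_layer N w' r2 = Suc a \<and>
     (\<exists>W1. W1 r1 = a \<and> W1 r2 = a \<and> (\<forall>s. s \<noteq> r1 \<longrightarrow> W1 s = fold apply_layer N w s)
        \<and> (\<forall>s. s \<noteq> r2 \<longrightarrow> W1 s = fold apply_layer N w' s))"
proof -
  define w1 where "w1 = w(p0 := a)"
  obtain r1 where r1: "r1 \<in> {1..n}" "fold apply_layer N w r1 = w p0"
     "fold apply_layer N w1 r1 + 1 = fold apply_layer N w r1"
     "\<forall>s. s \<noteq> r1 \<longrightarrow> fold apply_layer N w1 s = fold apply_layer N w s"
    using run_sd[OF N p0, of w1 w] wp by (auto simp: w1_def)
  obtain r2 where r2: "r2 \<in> {1..n}" "fold apply_layer N w' r2 = w' q0"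
     "fold apply_layer N w1 r2 + 1 = fold apply_layer N w' r2"
     "\<forall>s. s \<noteq> r2 \<longrightarrow> fold apply_layer N w1 s = fold apply_layer N w' s"
    using run_sd[OF N q0, of w1 w'] wq pq by (auto simp: w1_def w')
  show ?thesis
    apply (rule exI[of _ r1], rule exI[of _ r2])
    apply (intro conjI r1(1) r2(1))
    using r1 r2 wp pq w' by (auto intro!: exI[of _ "fold apply_layer N w1"])
qed

lemma core:
  assumes N: "valid n N" and ij: "1 \<le> i" "i < m" "m < j" "j \<le> n"
  shows "inj_on v {1..n} \<Longrightarrow>
    \<not> (fold apply_layer N v i < fold apply_layer N v m \<and> fold apply_layer N v m < fold apply_layer N v j) \<Longrightarrow>
    \<exists>w. fold apply_layer N w m < min (fold apply_layer N w i) (fold apply_layer N w j) \<or>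
        max (fold apply_layer N w i) (fold apply_layer N w j) < fold apply_layer N w m"
proof (induction "card (invs n v)" arbitrary: v rule: less_induct)
  case less
  note inj = less.prems(1) and nasc = less.prems(2)
  show ?case
  proof (cases "invs n v = {}")
    case True
    have srt: "\<forall>p q. 1 \<le> p \<longrightarrow> p \<le> q \<longrightarrow> q \<le> n \<longrightarrow> v p \<le> v q"
    proof (intro allI impI)
      fix p q assume pq: "1 \<le> p" "p \<le> q" "q \<le> n"
      show "v p \<le> v q"
      proof (rule ccontr)
        assume h: "\<not> v p \<le> v q"
        then have "p \<noteq> q" by auto
        then have "(p,q) \<in> invs n v" using pq h by (auto simp: invs_def)
        then show False using True by auto
      qed
    qed
    have run: "fold apply_layer N v = v" by (rule run_sorted[OF N srt])
    have "v i \<le> v m" "v m \<le> v j" using srt ij by auto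
    moreover have "v i \<noteq> v m" "v m \<noteq> v j" using inj_onD[OF inj, of i m] inj_onD[OF inj, of m j] ij by auto
    ultimately show ?thesis using nasc run by simp
  next
    case False
    then obtain pq where "pq \<in> invs n v" by auto
    then obtain pq0 where pq0: "pq0 \<in> invs n v"
      "\<forall>pq'. pq' \<in> invs n v \<longrightarrow> v (fst pq0) - v (snd pq0) \<le> v (fst pq') - v (snd pq')"
      using ex_has_least_nat[of "\<lambda>pq. pq \<in> invs n v" pq "\<lambda>pq. v (fst pq) - v (snd pq)"] by blast
    obtain p0 q0 where pq0e: "pq0 = (p0,q0)" by (cases pq0)
    have p0: "p0 \<in> {1..n}" "q0 \<in> {1..n}" "p0 < q0" "v q0 < v p0" using pq0 pq0e by (auto simp: invs_def)
    define a where "a = v q0"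
    define b where "b = v p0"
    have ab: "a < b" using p0 a_def b_def by auto
    have nob: "\<not> (a < v s \<and> v s < b)" if s: "s \<in> {1..n}" for s
    proof
      assume h: "a < v s \<and> v s < b"
      show False
      proof (cases "p0 < s")
        case True
        then have "(p0,s) \<in> invs n v" using s p0 h b_def by (auto simp: invs_def)
        then have "v p0 - v q0 \<le> v p0 - v s" using pq0 pq0e by fastforce
        then show False using h a_def b_def by linarith
      next
        case False
        have "s \<noteq> p0" using h b_def by auto
        then have "s < q0" using False p0 by auto
        then have "(s,q0) \<in> invs n v" using s p0 h a_def by (auto simp: invs_def)
        then have "v p0 - v q0 \<le> v s - v q0" using pq0 pq0e by fastforce
        then show False using h a_def b_def by linarith
      qed
    qed
    define g where "g u = (if b \<le> u then u + a + 1 - b else min u a)" for u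
    have gmono: "mono g" unfolding mono_def g_def using ab by auto
    have gvals: "u \<le> a \<or> b \<le> u" if "u \<in> v ` {1..n}" for u using nob that by force
    have gstrict: "g u < g u'" if "u \<in> v ` {1..n}" "u' \<in> v ` {1..n}" "u < u'" for u u'
      using gvals[OF that(1)] gvals[OF that(2)] that(3) ab unfolding g_def by auto
    define w where "w = g \<circ> v"
    have inj_w: "inj_on w {1..n}"
    proof (rule inj_onI)
      fix s t assume st: "s \<in> {1..n}" "t \<in> {1..n}" "w s = w t"
      have "v s = v t"
      proof (rule ccontr)
        assume "v s \<noteq> v t"
        then consider "v s < v t" | "v t < v s" by linarith
        then show False
          using gstrict[of "v s" "v t"] gstrict[of "v t" "v s"] st unfolding w_def by (cases) auto
      qed
      then show "s = t" using inj_onD[OF inj] st by blast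
    qed
    have runw: "fold apply_layer N w = g \<circ> fold apply_layer N v"
      unfolding w_def by (rule run_mono_comm[OF gmono])
    have nasc_w: "\<not> (fold apply_layer N w i < fold apply_layer N w m \<and> fold apply_layer N w m < fold apply_layer N w j)"
    proof
      assume h: "fold apply_layer N w i < fold apply_layer N w m \<and> fold apply_layer N w m < fold apply_layer N w j"
      have "fold apply_layer N v i < fold apply_layer N v m" "fold apply_layer N v m < fold apply_layer N v j"
        using h runw gmono by (metis comp_apply monoD not_le)+
      then show False using nasc by auto
    qed
    have wp0: "w p0 = Suc a" unfolding w_def g_def b_def using ab by auto
    have wq0: "w q0 = a" unfolding w_def g_def a_def using ab a_def b_def by auto
    define w' where "w' = w(p0 := a, q0 := Suc a)"
    have wother: "(v s < a \<and> w s = v s) \<or> (b < v s \<and> w s = v s + a + 1 - b)"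
      if "s \<in> {1..n}" "s \<noteq> p0" "s \<noteq> q0" for s
    proof -
      have "v s \<noteq> a" using inj_onD[OF inj, of s q0] that p0 a_def by auto
      moreover have "v s \<noteq> b" using inj_onD[OF inj, of s p0] that p0 b_def by auto
      ultimately show ?thesis using nob[OF that(1)] ab unfolding w_def g_def by auto
    qed
    have invs_sub: "invs n w' \<subseteq> invs n v - {(p0,q0)}"
    proof
      fix x assume "x \<in> invs n w'"
      then obtain p q where x: "x = (p,q)" "p \<in> {1..n}" "q \<in> {1..n}" "p < q" "w' q < w' p"
        by (auto simp: invs_def)
      have w'p: "w' p = (if p = q0 then Suc a else if p = p0 then a else w p)" by (simp add: w'_def)
      have w'q: "w' q = (if q = q0 then Suc a else if q = p0 then a else w q)" by (simp add: w'_def)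
      have "v q < v p"
      proof -
        consider "p = p0" | "p = q0" | "p \<noteq> p0" "p \<noteq> q0" by blast
        then show ?thesis
        proof cases
          case 1
          then have "q \<noteq> p0" "q \<noteq> q0" using x(4) w'q x(5) w'p by auto
          then show ?thesis using 1 wother[OF x(3)] w'p w'q x(5) p0(3) b_def ab by auto
        next
          case 2
          then have "q \<noteq> p0" using x(4) p0(3) by auto
          moreover have "q \<noteq> q0" using 2 x(4) by auto
          ultimately show ?thesis using 2 wother[OF x(3)] w'p w'q x(5) p0(3) a_def ab by auto
        next
          case 3
          consider "q = p0" | "q = q0" | "q \<noteq> p0" "q \<noteq> q0" by blast
          then show ?thesis
          proof cases
            case 1 then show ?thesis using 3 wother[OF x(2)] w'p w'q x(5) p0(3) b_def ab by auto
          next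
            case 2 then show ?thesis using 3 wother[OF x(2)] w'p w'q x(5) p0(3) a_def b_def ab by auto
          next
            case 4: 3
            show ?thesis using 3 4 wother[OF x(2)] wother[OF x(3)] w'p w'q x(5) p0(3) ab by auto
          qed
        qed
      qed
      moreover have "(p,q) \<noteq> (p0,q0)" using x(5) w'p w'q p0(3) by auto
      ultimately show "x \<in> invs n v - {(p0,q0)}" using x by (auto simp: invs_def)
    qed
    have card_lt: "card (invs n w') < card (invs n v)"
    proof (rule psubset_card_mono[OF finite_invs])
      show "invs n w' \<subset> invs n v" using invs_sub pq0 pq0e by auto
    qed
    have inj_w': "inj_on w' {1..n}"
    proof (rule inj_onI)
      fix s t assume st: "s \<in> {1..n}" "t \<in> {1..n}" "w' s = w' t"
      show "s = t"
      proof -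
        have w's: "w' s = (if s = q0 then Suc a else if s = p0 then a else w s)" by (simp add: w'_def)
        have w't: "w' t = (if t = q0 then Suc a else if t = p0 then a else w t)" by (simp add: w'_def)
        consider "s = p0" | "s = q0" | "s \<noteq> p0" "s \<noteq> q0" by blast
        then show ?thesis
        proof cases
          case 1 then show ?thesis using wother[OF st(2)] w's w't st(3) p0(3) ab by (cases "t = p0"; cases "t = q0"; auto)
        next
          case 2 then show ?thesis using wother[OF st(2)] w's w't st(3) p0(3) ab by (cases "t = p0"; cases "t = q0"; auto)
        next
          case 3
          consider "t = p0" | "t = q0" | "t \<noteq> p0" "t \<noteq> q0" by blast
          then show ?thesis
          proof cases
            case 1 then show ?thesis using 3 wother[OF st(1)] w's w't st(3) ab p0(3) by auto
          next
            case 2 then show ?thesis using 3 wother[OF st(1)] w's w't st(3) ab p0(3) by auto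
          next
            case 4: 3
            show ?thesis using 3 4 w's w't st inj_onD[OF inj_w, of s t] by auto
          qed
        qed
      qed
    qed
    show ?thesis
    proof (cases "fold apply_layer N w' i < fold apply_layer N w' m \<and> fold apply_layer N w' m < fold apply_layer N w' j")
      case False
      then show ?thesis using less.hyps[OF card_lt inj_w' False] by blast
    next
      case True
      define W where "W = fold apply_layer N w"
      define W' where "W' = fold apply_layer N w'"
      obtain r1 r2 W1 where R: "r1 \<in> {1..n}" "r2 \<in> {1..n}" "W r1 = Suc a" "W' r2 = Suc a"
        "W1 r1 = a" "W1 r2 = a" "\<forall>s. s \<noteq> r1 \<longrightarrow> W1 s = W s" "\<forall>s. s \<noteq> r2 \<longrightarrow> W1 s = W' s"
        using swap_step[OF N p0(1) p0(2) _ wp0 wq0 w'_def] p0(3) unfolding W_def W'_def by auto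
      have injW: "inj_on W {1..n}" unfolding W_def by (rule run_inj[OF N inj_w])
      have injW': "inj_on W' {1..n}" unfolding W'_def by (rule run_inj[OF N inj_w'])
      have r12: "r1 \<noteq> r2"
      proof
        assume "r1 = r2"
        then have "W i = W' i" "W m = W' m" "W j = W' j" using R by (metis)+
        then show False using True nasc_w unfolding W_def W'_def by simp
      qed
      have fact: "(s = r1 \<and> W s = Suc a \<and> W' s = a) \<or> (s = r2 \<and> W s = a \<and> W' s = Suc a)
          \<or> (s \<noteq> r1 \<and> s \<noteq> r2 \<and> W s = W' s \<and> W s \<noteq> a \<and> W s \<noteq> Suc a)" if "s \<in> {1..n}" for s
      proof -
        have "W r2 = a" "W' r1 = a" using R r12 by metis+
        moreover have "s \<noteq> r1 \<Longrightarrow> W s \<noteq> Suc a" using injW R(1,3) that by (metis inj_onD)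
        moreover have "s \<noteq> r2 \<Longrightarrow> W s \<noteq> a" using injW R(2) that \<open>W r2 = a\<close> by (metis inj_onD)
        moreover have "s \<noteq> r1 \<Longrightarrow> s \<noteq> r2 \<Longrightarrow> W s = W' s" using R by metis
        ultimately show ?thesis using R r12 by auto
      qed
      have fi: "W' i < W' m" "W' m < W' j" using True unfolding W'_def by auto
      have nW: "\<not> (W i < W m \<and> W m < W j)" using nasc_w unfolding W_def by auto
      have "W m < min (W i) (W j) \<or> max (W i) (W j) < W m"
        using fact[of i] fact[of m] fact[of j] ij fi nW
        apply -
        apply (drule meta_mp, simp)+
        apply (elim disjE conjE)
        apply (simp_all add: min_def max_def)
        done
      then show ?thesis unfolding W_def by blast
    qed
  qed
qed

lemma H:
  assumes N: "valid n N" and ij: "1 \<le> i" "i < m" "m < j" "j \<le> n"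
    and gt: "fold apply_layer N x j < fold apply_layer N x i"
  shows "\<exists>x'. binary_input n x' \<and> fold apply_layer N x' i = fold apply_layer N x' j
              \<and> fold apply_layer N x' m \<noteq> fold apply_layer N x' i"
proof -
  define K where "K = Suc n"
  define v where "v s = x s * K + s mod K" for s
  define f where "f u = u div K" for u
  have fm: "mono f" unfolding f_def mono_def by (simp add: div_le_mono)
  have fv1: "(x s * K + s mod K) div K = x s" for s
  proof -
    have "(s mod K + x s * K) div K = s mod K div K + x s" using div_mult_self1[of K "s mod K" "x s"] K_def by simp
    then show ?thesis by (simp add: add.commute)
  qed
  have fv: "f \<circ> v = x" unfolding f_def v_def using fv1 by (auto simp: fun_eq_iff)
  have runx: "fold apply_layer N x = f \<circ> fold apply_layer N v"
    using run_mono_comm[OF fm, of N v] fv by simp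
  have injv: "inj_on v {1..n}"
  proof (rule inj_onI)
    fix s t assume st: "s \<in> {1..n}" "t \<in> {1..n}" "v s = v t"
    then have "v s mod K = v t mod K" by simp
    then have "s mod K = t mod K" unfolding v_def by (simp add: mod_add_left_eq[symmetric])
    then show "s = t" using st unfolding K_def by auto
  qed
  have nasc: "\<not> (fold apply_layer N v i < fold apply_layer N v m \<and> fold apply_layer N v m < fold apply_layer N v j)"
  proof
    assume h: "fold apply_layer N v i < fold apply_layer N v m \<and> fold apply_layer N v m < fold apply_layer N v j"
    then have "f (fold apply_layer N v i) \<le> f (fold apply_layer N v j)" using fm by (meson less_imp_le monoD order.strict_trans)
    then show False using gt runx by simp
  qed
  obtain w where w: "fold apply_layer N w m < min (fold apply_layer N w i) (fold apply_layer N w j) \<or>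
        max (fold apply_layer N w i) (fold apply_layer N w j) < fold apply_layer N w m"
    using core[OF N ij injv nasc] by blast
  define W where "W = fold apply_layer N w"
  show ?thesis
  proof (cases "W m < min (W i) (W j)")
    case True
    define g :: "nat \<Rightarrow> nat" where "g u = (if W m < u then 1 else 0)" for u
    have gm: "mono g" unfolding g_def mono_def by auto
    have r: "fold apply_layer N (g \<circ> w) = g \<circ> W" unfolding W_def by (rule run_mono_comm[OF gm])
    show ?thesis
      apply (rule exI[of _ "g \<circ> w"])
      using True r by (auto simp: binary_input_def g_def)
  next
    case False
    then have F: "max (W i) (W j) < W m" using w unfolding W_def by auto
    define g :: "nat \<Rightarrow> nat" where "g u = (if W m \<le> u then 1 else 0)" for u
    have gm: "mono g" unfolding g_def mono_def by auto
    have r: "fold apply_layer N (g \<circ> w) = g \<circ> W" unfolding W_def by (rule run_mono_comm[OF gm])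
    show ?thesis
      apply (rule exI[of _ "g \<circ> w"])
      using F r by (auto simp: binary_input_def g_def)
  qed
qed

lemma layer_sub: "is_layer n L \<Longrightarrow> L' \<subseteq> L \<Longrightarrow> is_layer n L'"
  unfolding is_layer_def by blast

lemma al_untouched:
  assumes L: "is_layer n L" and c: "(i,j) \<in> L"
  shows "apply_layer (L - {(i,j)}) y i = y i" "apply_layer (L - {(i,j)}) y j = y j"
proof -
  have "\<forall>q. (i,q) \<notin> L - {(i,j)}" using layer_lo_uniq[OF L c] by blast
  moreover have "\<forall>q. (q,i) \<notin> L - {(i,j)}" using layer_not_both[OF L c] by blast
  ultimately show "apply_layer (L - {(i,j)}) y i = y i" by (rule al_none)
  have "\<forall>q. (j,q) \<notin> L - {(i,j)}" using layer_not_both[OF L _ c] by blast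
  moreover have "\<forall>q. (q,j) \<notin> L - {(i,j)}" using layer_hi_uniq[OF L c] by blast
  ultimately show "apply_layer (L - {(i,j)}) y j = y j" by (rule al_none)
qed

lemma al_eq_minus:
  assumes L: "is_layer n L" and c: "c \<in> L" and s: "s \<noteq> fst c" "s \<noteq> snd c"
  shows "apply_layer L y s = apply_layer (L - {c}) y s"
proof -
  have L': "is_layer n (L - {c})" using layer_sub[OF L] by blast
  consider (lo) q where "(s,q) \<in> L" | (hi) q where "(q,s) \<in> L" | (none) "\<forall>q. (s,q) \<notin> L" "\<forall>q. (q,s) \<notin> L"
    by blast
  then show ?thesis
  proof cases
    case (lo q)
    then have "(s,q) \<in> L - {c}" using s by auto
    then show ?thesis using al_lo[OF L lo] al_lo[OF L'] by metis
  next
    case (hi q)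
    then have "(q,s) \<in> L - {c}" using s by auto
    then show ?thesis using al_hi[OF L hi] al_hi[OF L'] by metis
  next
    case none
    then show ?thesis using al_none[of s L] al_none[of s "L - {c}"] by auto
  qed
qed

lemma al_equal_pair:
  assumes L: "is_layer n L" and c: "(i,j) \<in> L"
    and eq: "apply_layer (L - {(i,j)}) y i = apply_layer (L - {(i,j)}) y j"
  shows "apply_layer L y = apply_layer (L - {(i,j)}) y"
proof
  fix s
  have u: "apply_layer (L - {(i,j)}) y i = y i" "apply_layer (L - {(i,j)}) y j = y j"
    using al_untouched[OF L c] by auto
  show "apply_layer L y s = apply_layer (L - {(i,j)}) y s"
  proof (cases "s = i \<or> s = j")
    case True
    then show ?thesis using al_lo[OF L c, of y] al_hi[OF L c, of y] u eq by auto
  next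
    case False
    then show ?thesis using al_eq_minus[OF L c] by auto
  qed
qed

lemma state_Suc:
  "k < length C \<Longrightarrow> state C (Suc k) x = apply_layer (C ! k) (state C k x)"
  by (simp add: state_def take_Suc_conv_app_nth)

lemma run_snoc:
  "fold apply_layer (take k C @ [L]) x = apply_layer L (state C k x)"
  by (simp add: state_def)

lemma valid_take: "valid n C \<Longrightarrow> valid n (take k C)"
  unfolding valid_def by (meson in_set_takeD)

lemma up1:
  assumes L: "is_layer n L" and adj: "\<And>k l. (k,l) \<in> L \<Longrightarrow> l = Suc k"
    and z1: "z s = 1" and zb: "\<forall>t\<in>{1..n}. z t \<le> 1"
  shows "\<exists>p. s \<le> p \<and> p \<le> Suc s \<and> apply_layer L z p = 1 \<and> (p \<noteq> s \<longrightarrow> (s,p) \<in> L)"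
proof -
  consider (lo) q where "(s,q) \<in> L" | (hi) q where "(q,s) \<in> L" | (none) "\<forall>q. (s,q) \<notin> L" "\<forall>q. (q,s) \<notin> L"
    by blast
  then show ?thesis
  proof cases
    case (lo q)
    have "z q \<le> 1" using zb layer_rng[OF L lo] by auto
    then show ?thesis using al_hi[OF L lo, of z] adj[OF lo] z1 lo by (intro exI[of _ q]) (auto simp: max_def)
  next
    case (hi q)
    have "z q \<le> 1" using zb layer_rng[OF L hi] by auto
    then show ?thesis using al_hi[OF L hi, of z] z1 by (intro exI[of _ s]) (auto simp: max_def)
  next
    case none then show ?thesis using al_none[OF none, of z] z1 by (intro exI[of _ s]) auto
  qed
qed

lemma dn0:
  assumes L: "is_layer n L" and adj: "\<And>k l. (k,l) \<in> L \<Longrightarrow> l = Suc k"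
    and z0: "z s = 0"
  shows "\<exists>q. q \<le> s \<and> s \<le> Suc q \<and> apply_layer L z q = 0 \<and> (q \<noteq> s \<longrightarrow> (q,s) \<in> L)"
proof -
  consider (lo) q where "(s,q) \<in> L" | (hi) q where "(q,s) \<in> L" | (none) "\<forall>q. (s,q) \<notin> L" "\<forall>q. (q,s) \<notin> L"
    by blast
  then show ?thesis
  proof cases
    case (lo q)
    then show ?thesis using al_lo[OF L lo, of z] z0 by (intro exI[of _ s]) auto
  next
    case (hi q)
    then show ?thesis using al_lo[OF L hi, of z] adj[OF hi] z0 hi by (intro exI[of _ q]) auto
  next
    case none then show ?thesis using al_none[OF none, of z] z0 by (intro exI[of _ s]) auto
  qed
qed

theorem lemma5:
  fixes n :: nat and C :: network
  assumes "sorting_network n C"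
    and "length C \<ge> 2"
    and "no_redundant n C"
    and "(i, j) \<in> C ! (length C - 2)"
    and "i < m" and "m < j"
  shows "m \<in> block n C i \<or> m \<in> block n C j"
proof (rule ccontr)
  assume nb: "\<not> (m \<in> block n C i \<or> m \<in> block n C j)"
  define d where "d = length C"
  have netC: "valid n C" using assms(1) unfolding sorting_network_def is_network_def valid_def by auto
  have srt: "\<And>x p q. binary_input n x \<Longrightarrow> 1 \<le> p \<Longrightarrow> p \<le> q \<Longrightarrow> q \<le> n \<Longrightarrow> state C d x p \<le> state C d x q"
    using assms(1) unfolding sorting_network_def d_def by blast
  define L1 where "L1 = C ! (d - 2)"
  define L2 where "L2 = C ! (d - 1)"
  have d2: "2 \<le> d" using assms(2) d_def by simp
  have L1l: "is_layer n L1" using netC d2 unfolding L1_def valid_def d_def by auto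
  have L2l: "is_layer n L2" using netC d2 unfolding L2_def valid_def d_def by auto
  have stlast: "state C d x = apply_layer L2 (state C (d-1) x)" for x
  proof -
    have "Suc (d-1) = d" using d2 by arith
    then show ?thesis using state_Suc[of "d-1" C x] d2 unfolding L2_def d_def by simp
  qed
  have stpen: "state C (d-1) x = apply_layer L1 (state C (d-2) x)" for x
  proof -
    have "Suc (d-2) = d - 1" using d2 by arith
    then show ?thesis using state_Suc[of "d-2" C x] d2 unfolding L1_def d_def by simp
  qed
  have Cne: "C \<noteq> []" using d2 d_def by auto
  have lastC: "last C = L2" using last_conv_nth[OF Cne] unfolding L2_def d_def by simp
  have nr: "\<And>l c. l \<in> {1..d} \<Longrightarrow> c \<in> C!(l-1) \<Longrightarrow> \<not> redundant n C l c"
    using assms(3) unfolding no_redundant_def d_def by blast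
  have adj: "\<And>k l. (k,l) \<in> L2 \<Longrightarrow> l = Suc k"
  proof (rule ccontr)
    fix k l assume kl: "(k,l) \<in> L2" and ne: "l \<noteq> Suc k"
    note r = layer_rng[OF L2l kl]
    have kl2: "Suc k < l" using ne r by auto
    have "\<not> redundant n C d (k,l)" using nr[of d "(k,l)"] kl d2 L2_def by auto
    then obtain x where x: "binary_input n x" "\<not> state C (d-1) x k \<le> state C (d-1) x l"
      unfolding redundant_def by auto
    define N2 where "N2 = take (d-1) C @ [L2 - {(k,l)}]"
    have vN2: "valid n N2" using valid_take[OF netC] layer_sub[OF L2l]
      unfolding N2_def valid_def by auto
    have rN2: "fold apply_layer N2 y = apply_layer (L2 - {(k,l)}) (state C (d-1) y)" for y
      unfolding N2_def by (rule run_snoc)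
    have "fold apply_layer N2 x l < fold apply_layer N2 x k" using x(2) rN2 al_untouched[OF L2l kl] by auto
    then obtain x' where x': "binary_input n x'" "fold apply_layer N2 x' k = fold apply_layer N2 x' l"
        "fold apply_layer N2 x' (Suc k) \<noteq> fold apply_layer N2 x' k"
      using H[OF vN2, of k "Suc k" l x] r kl2 by auto
    have out: "state C d x' = fold apply_layer N2 x'"
      using stlast[of x'] rN2[of x'] al_equal_pair[OF L2l kl] x'(2) by simp
    show False using srt[OF x'(1), of k "Suc k"] srt[OF x'(1), of "Suc k" l] out x' r kl2 by auto
  qed
  have ij: "(i,j) \<in> L1" using assms(4) unfolding L1_def d_def .
  note rij = layer_rng[OF L1l ij]
  have mb: "m \<in> {1..n}" using rij assms(5,6) by auto
  have blk_i: "(i,m) \<notin> L2"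
  proof
    assume "(i,m) \<in> L2"
    then have "(i,m) \<in> (last_edges C)\<^sup>*" unfolding last_edges_def lastC by auto
    then show False using nb mb unfolding block_def by auto
  qed
  have blk_j: "(m,j) \<notin> L2"
  proof
    assume "(m,j) \<in> L2"
    then have "(j,m) \<in> (last_edges C)\<^sup>*" unfolding last_edges_def lastC by auto
    then show False using nb mb unfolding block_def by auto
  qed
  have "\<not> redundant n C (d-1) (i,j)" using nr[of "d-1" "(i,j)"] ij d2 L1_def
    by (auto simp: diff_diff_add numeral_2_eq_2)
  then obtain x where x: "binary_input n x" "\<not> state C (d-2) x i \<le> state C (d-2) x j"
    unfolding redundant_def by (auto simp: diff_diff_add numeral_2_eq_2)
  define N1 where "N1 = take (d-2) C @ [L1 - {(i,j)}]"
  have vN1: "valid n N1" using valid_take[OF netC] layer_sub[OF L1l]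
    unfolding N1_def valid_def by auto
  have rN1: "fold apply_layer N1 y = apply_layer (L1 - {(i,j)}) (state C (d-2) y)" for y
    unfolding N1_def by (rule run_snoc)
  have "fold apply_layer N1 x j < fold apply_layer N1 x i" using x(2) rN1 al_untouched[OF L1l ij] by auto
  then obtain x' where x': "binary_input n x'" "fold apply_layer N1 x' i = fold apply_layer N1 x' j"
      "fold apply_layer N1 x' m \<noteq> fold apply_layer N1 x' i"
    using H[OF vN1, of i m j x] rij assms(5,6) by auto
  define z where "z = fold apply_layer N1 x'"
  have t: "state C (d-1) x' = z"
    using stpen[of x'] rN1[of x'] al_equal_pair[OF L1l ij] x'(2) unfolding z_def by simp
  have out: "state C d x' = apply_layer L2 z" using stlast t by simp
  have zb: "\<forall>t\<in>{1..n}. z t \<le> 1"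
  proof
    fix t assume "t \<in> {1..n}"
    then have "z t \<in> x' ` {1..n}" unfolding z_def by (rule run_range[OF vN1])
    then show "z t \<le> 1" using x'(1) unfolding binary_input_def by auto
  qed
  have zi: "z i \<le> 1" "z m \<le> 1" "z j \<le> 1" using zb rij mb by auto
  have zz: "z i = z j" "z m \<noteq> z i" using x' unfolding z_def by auto
  show False
  proof (cases "z i = 1")
    case True
    then have zm: "z m = 0" using zz zi by auto
    obtain p where p: "i \<le> p" "p \<le> Suc i" "apply_layer L2 z p = 1" "p \<noteq> i \<longrightarrow> (i,p) \<in> L2"
      using up1[of n L2 z i, OF L2l adj True zb] by blast
    obtain q where q: "q \<le> m" "m \<le> Suc q" "apply_layer L2 z q = 0" "q \<noteq> m \<longrightarrow> (q,m) \<in> L2"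
      using dn0[of n L2 z m, OF L2l adj zm] by blast
    have "p \<le> q"
    proof (rule ccontr)
      assume "\<not> p \<le> q"
      then have "q = i" "q \<noteq> m" using p q assms(5) by auto
      then show False using q(4) blk_i by auto
    qed
    then show False using srt[OF x'(1), of p q] out p q rij mb by auto
  next
    case False
    then have zi0: "z i = 0" using zi by auto
    then have zm: "z m = 1" "z j = 0" using zz zi by auto
    obtain p where p: "m \<le> p" "p \<le> Suc m" "apply_layer L2 z p = 1" "p \<noteq> m \<longrightarrow> (m,p) \<in> L2"
      using up1[of n L2 z m, OF L2l adj zm(1) zb] by blast
    obtain q where q: "q \<le> j" "j \<le> Suc q" "apply_layer L2 z q = 0" "q \<noteq> j \<longrightarrow> (q,j) \<in> L2"
      using dn0[of n L2 z j, OF L2l adj zm(2)] by blast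
    have "p \<le> q"
    proof (rule ccontr)
      assume "\<not> p \<le> q"
      then have "q = m" "q \<noteq> j" using p q assms(6) by auto
      then show False using q(4) blk_j by auto
    qed
    then show False using srt[OF x'(1), of p q] out p q rij mb by auto
  qed
qed

end
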